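(* For every $n\geq 2$, if $T$ is the caterpillar tree on a leaf set $X$ with $|X|=n$, then there exist strictly positive edge lengths for $T$ such that the ranking $\pi_T$ is strict and reversible with respect to $X'=\{x\}$, where $x=\arg\min_{x'\in X}FP_T(x')$ is the leaf with the lowest Fair Proportion index.
   Context: A rooted binary phylogenetic $X$-tree ($X$ finite, $|X|=n$) is a rooted tree whose root $\rho$ has in-degree 0 and out-degree 2, all edges directed away from $\rho$, all other interior vertices have in-degree 1 and out-degree 2, and whose leaves are bijectively labelled by $X$. Every edge $e$ has a strictly positive length $\lambda_e$. A cherry is a pair of leaves with the same parent; a caterpillar tree is a rooted binary phylogenetic tree with exactly one cherry. The Fair Proportion index of $x\in X$ is $FP_T(x)=\sum_{e\in P(T;\rho,x)}\lambda_e/D_e$, where $P(T;\rho,x)$ is the path from $\rho$ to $x$ and $D_e$ is the number of leaves descended from $e$. For $Y\subseteq X$, the induced subtree $T_Y$ is obtained from the minimal subtree of $T$ connecting $Y$ by suppressing all non-root vertices of in- and out-degree 1, adding the lengths of merged edges; if the root then has out-degree 1, it and its incident edge are deleted. The ranking $\pi_T$ orders $X$ by decreasing $FP_T$; it is strict if all values $FP_T(x)$ are pairwise distinct. For $X'\subset X$, $\widetilde X=X\setminus X'$ and $\widetilde T=T_{\widetilde X}$, a strict ranking $\pi_T$ is reversible with respect to $X'$ if for all distinct $x_i,x_j\in\widetilde X$, $FP_T(x_i)>FP_T(x_j)$ implies $FP_{\widetilde T}(x_i)<FP_{\widetilde T}(x_j)$. *)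

theory Defs
  imports Complex_Main
begin

text \<open>A node
  Nd a l b r has left child l reached by an edge of length a and right
  child r reached by an edge of length b.\<close>
datatype 'a ltree = Lf 'a | Nd real "'a ltree" real "'a ltree"

fun leaf_list :: "'a ltree \<Rightarrow> 'a list" where
  "leaf_list (Lf x) = [x]"
| "leaf_list (Nd a l b r) = leaf_list l @ leaf_list r"

fun leaves :: "'a ltree \<Rightarrow> 'a set" where
  "leaves (Lf x) = {x}"
| "leaves (Nd a l b r) = leaves l \<union> leaves r"

fun shape :: "'a ltree \<Rightarrow> 'a ltree" where
  "shape (Lf x) = Lf x"
| "shape (Nd a l b r) = Nd 0 (shape l) 0 (shape r)"

fun pos_lengths :: "'a ltree \<Rightarrow> bool" where
  "pos_lengths (Lf x) = True"
| "pos_lengths (Nd a l b r) = (a > 0 \<and> b > 0 \<and> pos_lengths l \<and> pos_lengths r)"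

text \<open>Rooted binary phylogenetic X-tree topology (root of out-degree 2,
  leaves bijectively labelled by X); edge lengths are not constrained here.\<close>
definition phylo_tree :: "'a set \<Rightarrow> 'a ltree \<Rightarrow> bool" where
  "phylo_tree X T \<longleftrightarrow> (\<exists>a l b r. T = Nd a l b r) \<and> distinct (leaf_list T)
     \<and> set (leaf_list T) = X"

fun cherries :: "'a ltree \<Rightarrow> 'a set set" where
  "cherries (Lf x) = {}"
| "cherries (Nd a (Lf x) b (Lf y)) = {{x, y}}"
| "cherries (Nd a l b r) = cherries l \<union> cherries r"

definition caterpillar :: "'a ltree \<Rightarrow> bool" where
  "caterpillar T \<longleftrightarrow> card (cherries T) = 1"

fun FP :: "'a ltree \<Rightarrow> 'a \<Rightarrow> real" where
  "FP (Lf y) x = 0"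
| "FP (Nd a l b r) x =
     (if x \<in> leaves l then a / real (card (leaves l)) + FP l x else 0)
   + (if x \<in> leaves r then b / real (card (leaves r)) + FP r x else 0)"

text \<open>Restriction to Y: returns None if no leaf of Y is below, otherwise
  Some (d, S) where S is the restricted subtree and d is the length that
  must be added to the edge entering it (from suppressed degree-1 vertices).\<close>
fun restr :: "'a set \<Rightarrow> 'a ltree \<Rightarrow> (real \<times> 'a ltree) option" where
  "restr Y (Lf y) = (if y \<in> Y then Some (0, Lf y) else None)"
| "restr Y (Nd a l b r) =
     (case (restr Y l, restr Y r) of
        (Some (d1, s1), Some (d2, s2)) \<Rightarrow> Some (0, Nd (a + d1) s1 (b + d2) s2)
      | (Some (d1, s1), None) \<Rightarrow> Some (a + d1, s1)
      | (None, Some (d2, s2)) \<Rightarrow> Some (b + d2, s2)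
      | (None, None) \<Rightarrow> None)"

text \<open>Induced subtree T_Y: the accumulated length above the top vertex
  (root of out-degree 1 and its incident edge) is deleted.\<close>
definition induced :: "'a ltree \<Rightarrow> 'a set \<Rightarrow> 'a ltree" where
  "induced T Y = snd (the (restr Y T))"

definition strict_ranking :: "'a ltree \<Rightarrow> bool" where
  "strict_ranking T \<longleftrightarrow> inj_on (FP T) (leaves T)"

definition reversible :: "'a ltree \<Rightarrow> 'a set \<Rightarrow> bool" where
  "reversible T X' \<longleftrightarrow> strict_ranking T \<and>
     (let Xt = leaves T - X'; Tt = induced T Xt in
      \<forall>xi\<in>Xt. \<forall>xj\<in>Xt. xi \<noteq> xj \<longrightarrow> FP T xi > FP T xj \<longrightarrow> FP Tt xi < FP Tt xj)"

end

theory Submission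
  imports Defs
begin

lemma leaves_set: "leaves T = set (leaf_list T)"
  by (induction T) auto

lemma finite_leaves[simp]: "finite (leaves T)"
  by (simp add: leaves_set)

lemma card_leaves: "distinct (leaf_list T) \<Longrightarrow> card (leaves T) = length (leaf_list T)"
  by (simp add: leaves_set distinct_card)

lemma finite_cherries: "finite (cherries T)"
  by (induction T rule: cherries.induct) auto

lemma cherries_sub: "c \<in> cherries T \<Longrightarrow> c \<subseteq> leaves T \<and> c \<noteq> {}"
  by (induction T rule: cherries.induct) auto

lemma cherries_ne0: "(\<exists>a l b r. T = Nd a l b r) \<longrightarrow> cherries T \<noteq> {}"
proof (induction T)
  case (Nd a l b r)
  then show ?case by (cases l; cases r) auto
qed simp

lemma cherries_ne: "cherries (Nd a l b r) \<noteq> {}"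
  using cherries_ne0 by blast

inductive cat :: "'a ltree \<Rightarrow> bool" where
  catB: "cat (Nd a (Lf x) b (Lf y))"
| catL: "cat S \<Longrightarrow> cat (Nd a (Lf z) b S)"
| catR: "cat S \<Longrightarrow> cat (Nd a S b (Lf z))"

lemma cat_len: "cat S \<Longrightarrow> length (leaf_list S) \<ge> 2"
  by (induction rule: cat.induct) auto

lemma cat_of: "distinct (leaf_list T) \<Longrightarrow> card (cherries T) = 1 \<Longrightarrow> cat T"
proof (induction T)
  case (Lf x)
  then show ?case by simp
next
  case (Nd a l b r)
  show ?case
  proof (cases l)
    case (Lf x)
    show ?thesis
    proof (cases r)
      case (Lf y)
      then show ?thesis using \<open>l = Lf x\<close> by (simp add: catB)
    next
      case (Nd a2 l2 b2 r2)
      then have "cat r" using Nd.IH(2) Nd.prems \<open>l = Lf x\<close> by auto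
      then show ?thesis using \<open>l = Lf x\<close> by (simp add: catL)
    qed
  next
    case (Nd a1 l1 b1 r1)
    show ?thesis
    proof (cases r)
      case (Lf y)
      then have "cat l" using Nd.IH(1) Nd.prems \<open>l = Nd a1 l1 b1 r1\<close> by auto
      then show ?thesis using \<open>r = Lf y\<close> by (simp add: catR)
    next
      case (Nd a2 l2 b2 r2)
      have e: "cherries (Nd a l b r) = cherries l \<union> cherries r"
        using \<open>l = Nd a1 l1 b1 r1\<close> Nd by simp
      have d: "cherries l \<inter> cherries r = {}"
      proof (rule ccontr)
        assume "cherries l \<inter> cherries r \<noteq> {}"
        then obtain c where "c \<in> cherries l" "c \<in> cherries r" by auto
        then have "c \<subseteq> leaves l" "c \<subseteq> leaves r" "c \<noteq> {}" using cherries_sub by blast+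
        moreover have "leaves l \<inter> leaves r = {}" using Nd.prems(1) by (auto simp: leaves_set)
        ultimately show False by blast
      qed
      have "cherries l \<noteq> {}" "cherries r \<noteq> {}"
        using cherries_ne \<open>l = Nd a1 l1 b1 r1\<close> \<open>r = Nd a2 l2 b2 r2\<close> by simp_all
      then have "card (cherries l) \<ge> 1" "card (cherries r) \<ge> 1"
        using finite_cherries by (simp_all add: Suc_le_eq card_gt_0_iff)
      then have "card (cherries (Nd a l b r)) \<ge> 2"
        using e d finite_cherries card_Un_disjoint by (metis add_mono one_add_one)
      then show ?thesis using Nd.prems by simp
    qed
  qed
qed

lemma restr_cong: "Y \<inter> leaves T = Y' \<inter> leaves T \<Longrightarrow> restr Y T = restr Y' T"
proof (induction T)
  case (Lf x)
  then show ?case by auto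
next
  case (Nd a l b r)
  have "Y \<inter> leaves l = Y' \<inter> leaves l" "Y \<inter> leaves r = Y' \<inter> leaves r" using Nd.prems by auto
  then show ?case using Nd.IH by simp
qed

lemma main:
  assumes "cat S" "distinct (leaf_list S)"
  shows "\<exists>S' y h d R. shape S' = shape S \<and> leaf_list S' = leaf_list S \<and> pos_lengths S'
    \<and> y \<in> leaves S \<and> h y = (0::nat) \<and> inj_on h (leaves S)
    \<and> (\<forall>x\<in>leaves S. h x < length (leaf_list S))
    \<and> (\<forall>x\<in>leaves S. FP S' x = 1 + (real (length (leaf_list S)) - 1) * (real (length (leaf_list S)) - 2) + real (h x))
    \<and> restr (leaves S - {y}) S' = Some (d, R) \<and> leaves R = leaves S - {y}
    \<and> (\<forall>x\<in>leaves S - {y}. d / (real (length (leaf_list S)) - 1) + FP R x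
          = real (length (leaf_list S)) ^ 2 - real (length (leaf_list S)) + 1 - real (h x))"
  using assms
proof (induction rule: cat.induct)
  case (catB a x b y)
  then have xy: "x \<noteq> y" by simp
  let ?S' = "Nd 2 (Lf x) 1 (Lf y) :: 'a ltree"
  let ?h = "(\<lambda>_. 0::nat)(x := 1)"
  have r: "restr ({x, y} - {y}) ?S' = Some (2, Lf x)" using xy by simp
  show ?case
    apply (rule exI[of _ ?S'], rule exI[of _ y], rule exI[of _ ?h], rule exI[of _ 2], rule exI[of _ "Lf x"])
    using xy r by (auto simp: inj_on_def)
next
  case (catL S a z b)
  then have dS: "distinct (leaf_list S)" and zS: "z \<notin> leaves S" by (auto simp: leaves_set)
  from catL.IH[OF dS] obtain S0 y h d R where
    sh: "shape S0 = shape S" and ll: "leaf_list S0 = leaf_list S" and pl: "pos_lengths S0"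
    and y: "y \<in> leaves S" and hy: "h y = 0" and hi: "inj_on h (leaves S)"
    and hb: "\<forall>x\<in>leaves S. h x < length (leaf_list S)"
    and fp: "\<forall>x\<in>leaves S. FP S0 x = 1 + (real (length (leaf_list S)) - 1) * (real (length (leaf_list S)) - 2) + real (h x)"
    and rs: "restr (leaves S - {y}) S0 = Some (d, R)" and lR: "leaves R = leaves S - {y}"
    and fR: "\<forall>x\<in>leaves S - {y}. d / (real (length (leaf_list S)) - 1) + FP R x
          = real (length (leaf_list S)) ^ 2 - real (length (leaf_list S)) + 1 - real (h x)"
    by (elim exE conjE) (rule that; assumption)
  define m where "m = length (leaf_list S)"
  have m2: "m \<ge> 2" using cat_len[OF catL.hyps] m_def by simp
  have lS0: "leaves S0 = leaves S" using ll by (simp add: leaves_set)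
  have cS: "card (leaves S) = m" using card_leaves[OF dS] m_def by simp
  have cR: "card (leaves R) = m - 1" using lR cS y by simp
  define f :: real where "f = 1 + real m ^ 2"
  define g :: real where "g = 2 * real m * (real m - 1)"
  define S' where "S' = Nd f (Lf z) g S0"
  define h' where "h' = h(z := m)"
  define R' where "R' = Nd f (Lf z) (g + d) R"
  have yz: "y \<noteq> z" using y zS by auto
  have gpos: "g > 0" using m2 unfolding g_def by simp
  have fpos: "f > 0" unfolding f_def by (simp add: add_pos_nonneg)
  have eqY: "(leaves (Nd a (Lf z) b S) - {y}) \<inter> leaves S0 = (leaves S - {y}) \<inter> leaves S0"
    using lS0 zS by auto
  have rs': "restr (leaves (Nd a (Lf z) b S) - {y}) S' = Some (0, R')"
    using restr_cong[OF eqY] rs yz unfolding S'_def R'_def by simp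
  have len: "length (leaf_list (Nd a (Lf z) b S)) = m + 1" using m_def by simp
  have m1: "real m - 1 \<noteq> 0" using m2 by simp
  have m0: "real m \<noteq> 0" using m2 by simp
  show ?case
  proof (rule exI[of _ S'], rule exI[of _ y], rule exI[of _ h'], rule exI[of _ 0], rule exI[of _ R'], intro conjI)
    show "shape S' = shape (Nd a (Lf z) b S)" using sh S'_def by simp
    show "leaf_list S' = leaf_list (Nd a (Lf z) b S)" using ll S'_def by simp
    show "pos_lengths S'" using pl gpos fpos S'_def by simp
    show "y \<in> leaves (Nd a (Lf z) b S)" using y by simp
    show "h' y = 0" using hy yz h'_def by simp
    have hS: "\<And>x. x \<in> leaves S \<Longrightarrow> h' x = h x" using zS h'_def by auto
    have hb': "\<And>x. x \<in> leaves S \<Longrightarrow> h x < m" using hb m_def by blast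
    have hz: "h' z = m" using h'_def by simp
    have i1: "inj_on h' (leaves S)" using inj_on_cong[of "leaves S" h' h] hS hi by blast
    have i2: "h' z \<notin> h' ` (leaves S - {z})" using hS hb' hz by force
    show "inj_on h' (leaves (Nd a (Lf z) b S))"
      using i1 i2 by (simp add: inj_on_insert)
    show "\<forall>x\<in>leaves (Nd a (Lf z) b S). h' x < length (leaf_list (Nd a (Lf z) b S))"
    proof
      fix x assume "x \<in> leaves (Nd a (Lf z) b S)"
      then have "x = z \<or> x \<in> leaves S" by auto
      then show "h' x < length (leaf_list (Nd a (Lf z) b S))" using hS hb' hz len by fastforce
    qed
    show "restr (leaves (Nd a (Lf z) b S) - {y}) S' = Some (0, R')" by (rule rs')
    show "leaves R' = leaves (Nd a (Lf z) b S) - {y}" using lR yz R'_def by auto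
    show "\<forall>x\<in>leaves (Nd a (Lf z) b S).
       FP S' x = 1 + (real (length (leaf_list (Nd a (Lf z) b S))) - 1) * (real (length (leaf_list (Nd a (Lf z) b S))) - 2) + real (h' x)"
    proof
      fix x assume x: "x \<in> leaves (Nd a (Lf z) b S)"
      show "FP S' x = 1 + (real (length (leaf_list (Nd a (Lf z) b S))) - 1) * (real (length (leaf_list (Nd a (Lf z) b S))) - 2) + real (h' x)"
      proof (cases "x = z")
        case True
        then show ?thesis using zS lS0 unfolding S'_def len h'_def f_def
          by (simp add: power2_eq_square algebra_simps)
      next
        case False
        then have xS: "x \<in> leaves S" using x by simp
        have "FP S' x = g / real m + FP S0 x" using False xS lS0 cS unfolding S'_def by simp
        also have "... = 2 * (real m - 1) + FP S0 x" unfolding g_def using m0 by simp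
        finally show ?thesis using fp xS False unfolding len h'_def m_def
          by (simp add: algebra_simps)
      qed
    qed
    show "\<forall>x\<in>leaves (Nd a (Lf z) b S) - {y}.
       0 / (real (length (leaf_list (Nd a (Lf z) b S))) - 1) + FP R' x =
       real (length (leaf_list (Nd a (Lf z) b S))) ^ 2 - real (length (leaf_list (Nd a (Lf z) b S))) + 1 - real (h' x)"
    proof
      fix x assume x: "x \<in> leaves (Nd a (Lf z) b S) - {y}"
      show "0 / (real (length (leaf_list (Nd a (Lf z) b S))) - 1) + FP R' x =
       real (length (leaf_list (Nd a (Lf z) b S))) ^ 2 - real (length (leaf_list (Nd a (Lf z) b S))) + 1 - real (h' x)"
      proof (cases "x = z")
        case True
        then show ?thesis using zS lR unfolding R'_def len h'_def f_def
          by (simp add: power2_eq_square algebra_simps)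
      next
        case False
        then have xS: "x \<in> leaves S - {y}" using x by simp
        have cR': "real (card (leaves R)) = real m - 1" using cR m2 by simp
        have "FP R' x = (g + d) / (real m - 1) + FP R x" using False xS lR cR' unfolding R'_def by simp
        also have "... = 2 * real m + (d / (real m - 1) + FP R x)" unfolding g_def using m1
          by (simp add: add_divide_distrib)
        finally show ?thesis using fR xS False unfolding len h'_def m_def
          by (simp add: algebra_simps power2_eq_square)
      qed
    qed
  qed
next
  case (catR S a b z)
  then have dS: "distinct (leaf_list S)" and zS: "z \<notin> leaves S" by (auto simp: leaves_set)
  from catR.IH[OF dS] obtain S0 y h d R where
    sh: "shape S0 = shape S" and ll: "leaf_list S0 = leaf_list S" and pl: "pos_lengths S0"
    and y: "y \<in> leaves S" and hy: "h y = 0" and hi: "inj_on h (leaves S)"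
    and hb: "\<forall>x\<in>leaves S. h x < length (leaf_list S)"
    and fp: "\<forall>x\<in>leaves S. FP S0 x = 1 + (real (length (leaf_list S)) - 1) * (real (length (leaf_list S)) - 2) + real (h x)"
    and rs: "restr (leaves S - {y}) S0 = Some (d, R)" and lR: "leaves R = leaves S - {y}"
    and fR: "\<forall>x\<in>leaves S - {y}. d / (real (length (leaf_list S)) - 1) + FP R x
          = real (length (leaf_list S)) ^ 2 - real (length (leaf_list S)) + 1 - real (h x)"
    by (elim exE conjE) (rule that; assumption)
  define m where "m = length (leaf_list S)"
  have m2: "m \<ge> 2" using cat_len[OF catR.hyps] m_def by simp
  have lS0: "leaves S0 = leaves S" using ll by (simp add: leaves_set)
  have cS: "card (leaves S) = m" using card_leaves[OF dS] m_def by simp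
  have cR: "card (leaves R) = m - 1" using lR cS y by simp
  define f :: real where "f = 1 + real m ^ 2"
  define g :: real where "g = 2 * real m * (real m - 1)"
  define S' where "S' = Nd g S0 f (Lf z)"
  define h' where "h' = h(z := m)"
  define R' where "R' = Nd (g + d) R f (Lf z)"
  have yz: "y \<noteq> z" using y zS by auto
  have gpos: "g > 0" using m2 unfolding g_def by simp
  have fpos: "f > 0" unfolding f_def by (simp add: add_pos_nonneg)
  have eqY: "(leaves (Nd a S b (Lf z)) - {y}) \<inter> leaves S0 = (leaves S - {y}) \<inter> leaves S0"
    using lS0 zS by auto
  have rs': "restr (leaves (Nd a S b (Lf z)) - {y}) S' = Some (0, R')"
    using restr_cong[OF eqY] rs yz unfolding S'_def R'_def by simp
  have len: "length (leaf_list (Nd a S b (Lf z))) = m + 1" using m_def by simp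
  have m1: "real m - 1 \<noteq> 0" using m2 by simp
  have m0: "real m \<noteq> 0" using m2 by simp
  show ?case
  proof (rule exI[of _ S'], rule exI[of _ y], rule exI[of _ h'], rule exI[of _ 0], rule exI[of _ R'], intro conjI)
    show "shape S' = shape (Nd a S b (Lf z))" using sh S'_def by simp
    show "leaf_list S' = leaf_list (Nd a S b (Lf z))" using ll S'_def by simp
    show "pos_lengths S'" using pl gpos fpos S'_def by simp
    show "y \<in> leaves (Nd a S b (Lf z))" using y by simp
    show "h' y = 0" using hy yz h'_def by simp
    have hS: "\<And>x. x \<in> leaves S \<Longrightarrow> h' x = h x" using zS h'_def by auto
    have hb': "\<And>x. x \<in> leaves S \<Longrightarrow> h x < m" using hb m_def by blast
    have hz: "h' z = m" using h'_def by simp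
    have i1: "inj_on h' (leaves S)" using inj_on_cong[of "leaves S" h' h] hS hi by blast
    have i2: "h' z \<notin> h' ` (leaves S - {z})" using hS hb' hz by force
    show "inj_on h' (leaves (Nd a S b (Lf z)))"
      using i1 i2 by (simp add: inj_on_insert)
    show "\<forall>x\<in>leaves (Nd a S b (Lf z)). h' x < length (leaf_list (Nd a S b (Lf z)))"
    proof
      fix x assume "x \<in> leaves (Nd a S b (Lf z))"
      then have "x = z \<or> x \<in> leaves S" by auto
      then show "h' x < length (leaf_list (Nd a S b (Lf z)))" using hS hb' hz len by fastforce
    qed
    show "restr (leaves (Nd a S b (Lf z)) - {y}) S' = Some (0, R')" by (rule rs')
    show "leaves R' = leaves (Nd a S b (Lf z)) - {y}" using lR yz R'_def by auto
    show "\<forall>x\<in>leaves (Nd a S b (Lf z)).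
       FP S' x = 1 + (real (length (leaf_list (Nd a S b (Lf z)))) - 1) * (real (length (leaf_list (Nd a S b (Lf z)))) - 2) + real (h' x)"
    proof
      fix x assume x: "x \<in> leaves (Nd a S b (Lf z))"
      show "FP S' x = 1 + (real (length (leaf_list (Nd a S b (Lf z)))) - 1) * (real (length (leaf_list (Nd a S b (Lf z)))) - 2) + real (h' x)"
      proof (cases "x = z")
        case True
        then show ?thesis using zS lS0 unfolding S'_def len h'_def f_def
          by (simp add: power2_eq_square algebra_simps)
      next
        case False
        then have xS: "x \<in> leaves S" using x by simp
        have "FP S' x = g / real m + FP S0 x" using False xS lS0 cS unfolding S'_def by simp
        also have "... = 2 * (real m - 1) + FP S0 x" unfolding g_def using m0 by simp
        finally show ?thesis using fp xS False unfolding len h'_def m_def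
          by (simp add: algebra_simps)
      qed
    qed
    show "\<forall>x\<in>leaves (Nd a S b (Lf z)) - {y}.
       0 / (real (length (leaf_list (Nd a S b (Lf z)))) - 1) + FP R' x =
       real (length (leaf_list (Nd a S b (Lf z)))) ^ 2 - real (length (leaf_list (Nd a S b (Lf z)))) + 1 - real (h' x)"
    proof
      fix x assume x: "x \<in> leaves (Nd a S b (Lf z)) - {y}"
      show "0 / (real (length (leaf_list (Nd a S b (Lf z)))) - 1) + FP R' x =
       real (length (leaf_list (Nd a S b (Lf z)))) ^ 2 - real (length (leaf_list (Nd a S b (Lf z)))) + 1 - real (h' x)"
      proof (cases "x = z")
        case True
        then show ?thesis using zS lR unfolding R'_def len h'_def f_def
          by (simp add: power2_eq_square algebra_simps)
      next
        case False
        then have xS: "x \<in> leaves S - {y}" using x by simp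
        have cR': "real (card (leaves R)) = real m - 1" using cR m2 by simp
        have "FP R' x = (g + d) / (real m - 1) + FP R x" using False xS lR cR' unfolding R'_def by simp
        also have "... = 2 * real m + (d / (real m - 1) + FP R x)" unfolding g_def using m1
          by (simp add: add_divide_distrib)
        finally show ?thesis using fR xS False unfolding len h'_def m_def
          by (simp add: algebra_simps power2_eq_square)
      qed
    qed
  qed
qed

theorem corollary1:
  fixes X :: "'a set" and n :: nat and T :: "'a ltree"
  assumes "finite X" and "card X = n" and "n \<ge> 2"
    and "phylo_tree X T" and "caterpillar T"
  shows "\<exists>T'. shape T' = shape T \<and> phylo_tree X T' \<and> pos_lengths T' \<and> strict_ranking T'
    \<and> (\<forall>x\<in>X. (\<forall>x'\<in>X. FP T' x \<le> FP T' x') \<longrightarrow> reversible T' {x})"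
proof -
  obtain a l b r where T: "T = Nd a l b r" and dT: "distinct (leaf_list T)" and sX: "set (leaf_list T) = X"
    using assms(4) unfolding phylo_tree_def by blast
  have cT: "cat T" using cat_of[OF dT] assms(5) unfolding caterpillar_def by blast
  from main[OF cT dT] obtain S' y h d R where
    sh: "shape S' = shape T" and ll: "leaf_list S' = leaf_list T" and pl: "pos_lengths S'"
    and y: "y \<in> leaves T" and hy: "h y = 0" and hi: "inj_on h (leaves T)"
    and fp: "\<forall>x\<in>leaves T. FP S' x = 1 + (real (length (leaf_list T)) - 1) * (real (length (leaf_list T)) - 2) + real (h x)"
    and rs: "restr (leaves T - {y}) S' = Some (d, R)"
    and fR: "\<forall>x\<in>leaves T - {y}. d / (real (length (leaf_list T)) - 1) + FP R x
          = real (length (leaf_list T)) ^ 2 - real (length (leaf_list T)) + 1 - real (h x)"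
    by (elim exE conjE) (rule that; assumption)
  define C where "C = 1 + (real (length (leaf_list T)) - 1) * (real (length (leaf_list T)) - 2)"
  define D where "D = d / (real (length (leaf_list T)) - 1)"
  define K where "K = real (length (leaf_list T)) ^ 2 - real (length (leaf_list T)) + 1"
  have fp': "\<And>x. x \<in> leaves T \<Longrightarrow> FP S' x = C + real (h x)" using fp C_def by simp
  have fR': "FP R x = K - real (h x) - D" if "x \<in> leaves T - {y}" for x
  proof -
    have "D + FP R x = K - real (h x)" using fR that unfolding K_def D_def by blast
    then show ?thesis by linarith
  qed
  have lS: "leaves S' = leaves T" using ll by (simp add: leaves_set)
  have lX: "leaves T = X" using sX by (simp add: leaves_set)
  have isNd: "\<exists>a l b r. S' = Nd a l b r" using sh T by (cases S') auto
  have strict: "strict_ranking S'"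
    unfolding strict_ranking_def lS
  proof (rule inj_onI)
    fix x x' assume "x \<in> leaves T" "x' \<in> leaves T" "FP S' x = FP S' x'"
    then have "h x = h x'" using fp' by simp
    then show "x = x'" using hi \<open>x \<in> leaves T\<close> \<open>x' \<in> leaves T\<close> inj_on_def by metis
  qed
  have ind: "induced S' (leaves S' - {y}) = R" using rs lS unfolding induced_def by simp
  show ?thesis
  proof (rule exI[of _ S'], intro conjI)
    show "shape S' = shape T" by (rule sh)
    show "phylo_tree X S'" unfolding phylo_tree_def using isNd ll dT sX by simp
    show "pos_lengths S'" by (rule pl)
    show "strict_ranking S'" by (rule strict)
    show "\<forall>x\<in>X. (\<forall>x'\<in>X. FP S' x \<le> FP S' x') \<longrightarrow> reversible S' {x}"
    proof (intro ballI impI)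
      fix x assume x: "x \<in> X" and mn: "\<forall>x'\<in>X. FP S' x \<le> FP S' x'"
      have "FP S' x \<le> FP S' y" using mn y lX by blast
      then have "h x = h y" using fp' x y lX hy by simp
      then have xy: "x = y" using hi x y lX inj_on_def by metis
      show "reversible S' {x}"
        unfolding reversible_def Let_def xy ind
      proof (intro conjI strict ballI impI)
        fix xi xj assume xi: "xi \<in> leaves S' - {y}" and xj: "xj \<in> leaves S' - {y}"
          and gt: "FP S' xj < FP S' xi"
        have "h xj < h xi" using gt fp' xi xj lS by simp
        then show "FP R xi < FP R xj" using fR' xi xj lS by simp
      qed
    qed
  qed
qed

end
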